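(* For every $n\ge 2$, $\beta(P_{2\infty}\,\Box\, P_n)=3$, and $S=\{(0,0),(0,n-1),(1,0)\}$ is a metric basis of $P_{2\infty}\,\Box\, P_n$.
   Context: $P_{2\infty}$ has vertex set $\mathbb Z$ and $P_n$ has vertex set $\{0,1,\dots,n-1\}$; in both, $i,j$ are adjacent iff $|i-j|=1$. The cartesian product $G\Box H$ has vertex set $V(G)\times V(H)$, where $(a,v)$ is adjacent to $(b,w)$ iff either $a=b$ and $vw\in E(H)$, or $v=w$ and $ab\in E(G)$. A vertex $x$ resolves $u,v$ if $d(u,x)\ne d(v,x)$ (shortest-path distance); a resolving set is a set of vertices resolving every pair of distinct vertices; $\beta$ is the minimum cardinality of a resolving set ($\infty$ if none is finite), and a metric basis is a resolving set of cardinality $\beta$. *)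

theory Defs
  imports Main "HOL-Library.Extended_Nat"
begin

text \<open>A graph is given by a vertex set V and a symmetric adjacency relation adj.\<close>

definition is_walk :: "'a set \<Rightarrow> ('a \<Rightarrow> 'a \<Rightarrow> bool) \<Rightarrow> 'a list \<Rightarrow> bool" where
  "is_walk V adj xs \<longleftrightarrow> xs \<noteq> [] \<and> set xs \<subseteq> V \<and>
     (\<forall>i. Suc i < length xs \<longrightarrow> adj (xs ! i) (xs ! Suc i))"

text \<open>Shortest-path distance (infinity if no walk exists).\<close>
definition gdist :: "'a set \<Rightarrow> ('a \<Rightarrow> 'a \<Rightarrow> bool) \<Rightarrow> 'a \<Rightarrow> 'a \<Rightarrow> enat" where
  "gdist V adj u v = (INF xs \<in> {xs. is_walk V adj xs \<and> hd xs = u \<and> last xs = v}.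
                        enat (length xs - 1))"

definition resolves :: "'a set \<Rightarrow> ('a \<Rightarrow> 'a \<Rightarrow> bool) \<Rightarrow> 'a \<Rightarrow> 'a \<Rightarrow> 'a \<Rightarrow> bool" where
  "resolves V adj x u v \<longleftrightarrow> gdist V adj u x \<noteq> gdist V adj v x"

definition resolving_set :: "'a set \<Rightarrow> ('a \<Rightarrow> 'a \<Rightarrow> bool) \<Rightarrow> 'a set \<Rightarrow> bool" where
  "resolving_set V adj S \<longleftrightarrow> S \<subseteq> V \<and>
     (\<forall>u\<in>V. \<forall>v\<in>V. u \<noteq> v \<longrightarrow> (\<exists>x\<in>S. resolves V adj x u v))"

definition metric_dim :: "'a set \<Rightarrow> ('a \<Rightarrow> 'a \<Rightarrow> bool) \<Rightarrow> enat" where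
  "metric_dim V adj = (INF S \<in> {S. finite S \<and> resolving_set V adj S}. enat (card S))"

definition metric_basis :: "'a set \<Rightarrow> ('a \<Rightarrow> 'a \<Rightarrow> bool) \<Rightarrow> 'a set \<Rightarrow> bool" where
  "metric_basis V adj S \<longleftrightarrow> finite S \<and> resolving_set V adj S \<and> enat (card S) = metric_dim V adj"

definition P2inf_V :: "int set" where "P2inf_V = UNIV"
definition P2inf_adj :: "int \<Rightarrow> int \<Rightarrow> bool" where "P2inf_adj i j \<longleftrightarrow> \<bar>i - j\<bar> = 1"

definition Pn_V :: "nat \<Rightarrow> nat set" where "Pn_V n = {0..<n}"
definition Pn_adj :: "nat \<Rightarrow> nat \<Rightarrow> bool" where "Pn_adj i j \<longleftrightarrow> i + 1 = j \<or> j + 1 = i"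

definition cprod_V :: "'a set \<Rightarrow> 'b set \<Rightarrow> ('a \<times> 'b) set" where
  "cprod_V VG VH = VG \<times> VH"
definition cprod_adj :: "('a \<Rightarrow> 'a \<Rightarrow> bool) \<Rightarrow> ('b \<Rightarrow> 'b \<Rightarrow> bool) \<Rightarrow> 'a \<times> 'b \<Rightarrow> 'a \<times> 'b \<Rightarrow> bool" where
  "cprod_adj adjG adjH p q \<longleftrightarrow>
     (fst p = fst q \<and> adjH (snd p) (snd q)) \<or> (snd p = snd q \<and> adjG (fst p) (fst q))"

end

theory Submission
  imports Defs
begin

definition md :: "int \<times> nat \<Rightarrow> int \<times> nat \<Rightarrow> nat" where
  "md p q = nat (\<bar>fst p - fst q\<bar> + \<bar>int (snd p) - int (snd q)\<bar>)"

lemma md_tri: "md p r \<le> md p q + md q r"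
  unfolding md_def by (cases p; cases q; cases r) (simp add: nat_add_distrib[symmetric] del: nat_add_distrib; arith)

lemma is_walk_Cons:
  "is_walk V adj (x # xs) \<longleftrightarrow> x \<in> V \<and> (xs = [] \<or> (adj x (hd xs) \<and> is_walk V adj xs))"
proof
  assume h: "is_walk V adj (x # xs)"
  show "x \<in> V \<and> (xs = [] \<or> (adj x (hd xs) \<and> is_walk V adj xs))"
  proof (cases xs)
    case Nil then show ?thesis using h by (simp add: is_walk_def)
  next
    case (Cons y ys)
    have "adj x y" using h Cons unfolding is_walk_def by (metis Suc_less_eq length_Cons nth_Cons_0 nth_Cons_Suc zero_less_Suc)
    moreover have "is_walk V adj xs"
    proof -
      have "\<forall>i. Suc i < length xs \<longrightarrow> adj (xs ! i) (xs ! Suc i)"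
      proof (intro allI impI)
        fix i assume "Suc i < length xs"
        then have "Suc (Suc i) < length (x # xs)" by simp
        then have "adj ((x # xs) ! Suc i) ((x # xs) ! Suc (Suc i))" using h unfolding is_walk_def by blast
        then show "adj (xs ! i) (xs ! Suc i)" by simp
      qed
      then show ?thesis using h Cons unfolding is_walk_def by auto
    qed
    ultimately show ?thesis using h Cons by (simp add: is_walk_def)
  qed
next
  assume h: "x \<in> V \<and> (xs = [] \<or> (adj x (hd xs) \<and> is_walk V adj xs))"
  show "is_walk V adj (x # xs)"
  proof (cases xs)
    case Nil then show ?thesis using h by (simp add: is_walk_def)
  next
    case (Cons y ys)
    show ?thesis unfolding is_walk_def
    proof (intro conjI allI impI)
      fix i assume i: "Suc i < length (x # xs)"
      show "adj ((x # xs) ! i) ((x # xs) ! Suc i)"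
      proof (cases i)
        case 0 then show ?thesis using h Cons by simp
      next
        case (Suc j) then show ?thesis using h Cons i unfolding is_walk_def by auto
      qed
    qed (use h Cons in \<open>auto simp: is_walk_def\<close>)
  qed
qed

lemma fin: assumes "b < n" "e < n" "n \<ge> 2"
  "md (a,b) (0,0) = md (c,e) (0,0)" "md (a,b) (0,n-1) = md (c,e) (0,n-1)" "md (a,b) (1,0) = md (c,e) (1,0)"
  shows "a = c \<and> b = e"
proof -
  have 1: "\<bar>a\<bar> + int b = \<bar>c\<bar> + int e" using assms(4) by (simp add: md_def)
  have 2: "\<bar>a\<bar> + (int n - 1 - int b) = \<bar>c\<bar> + (int n - 1 - int e)" using assms(1,2,3,5) by (simp add: md_def of_nat_diff)
  have 3: "\<bar>a - 1\<bar> + int b = \<bar>c - 1\<bar> + int e" using assms(6) by (simp add: md_def)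
  from 1 2 have "b = e" by linarith
  with 1 3 have "a = c" by linarith
  with \<open>b = e\<close> show ?thesis by simp
qed

abbreviation "GV n \<equiv> cprod_V P2inf_V (Pn_V n)"
abbreviation "GA \<equiv> cprod_adj P2inf_adj Pn_adj"

lemma GV_iff: "p \<in> GV n \<longleftrightarrow> snd p < n"
  by (cases p) (auto simp: cprod_V_def P2inf_V_def Pn_V_def)

lemma GA_md: "GA p q \<Longrightarrow> md p q = 1"
  by (cases p; cases q) (auto simp: cprod_adj_def P2inf_adj_def Pn_adj_def md_def)

lemma walk_lower: "is_walk V GA xs \<Longrightarrow> md (hd xs) (last xs) \<le> length xs - 1"
proof (induction xs)
  case Nil then show ?case by (simp add: is_walk_def)
next
  case (Cons x ys)
  show ?case
  proof (cases ys)
    case Nil then show ?thesis by (simp add: md_def)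
  next
    case (Cons y zs)
    have a: "GA x (hd ys)" and w: "is_walk V GA ys" using Cons.prems \<open>ys = y # zs\<close>
      by (auto simp: is_walk_Cons)
    have "md x (last ys) \<le> md x (hd ys) + md (hd ys) (last ys)" by (rule md_tri)
    also have "\<dots> \<le> 1 + (length ys - 1)" using GA_md[OF a] Cons.IH[OF w] by simp
    finally show ?thesis using \<open>ys = y # zs\<close> by simp
  qed
qed

lemma step_exists:
  assumes "u \<in> GV n" "v \<in> GV n" "md u v = Suc k"
  shows "\<exists>w\<in>GV n. GA u w \<and> md w v = k"
proof -
  obtain a b c e where u: "u = (a,b)" and v: "v = (c,e)" by (cases u; cases v)
  have bn: "b < n" "e < n" using assms u v by (auto simp: GV_iff)
  have m: "nat (\<bar>a - c\<bar> + \<bar>int b - int e\<bar>) = Suc k" using assms(3) u v by (simp add: md_def)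
  consider "a < c" | "a > c" | "a = c" "b < e" | "a = c" "b > e" | "a = c" "b = e" by linarith
  then show ?thesis
  proof cases
    case 1 then show ?thesis using bn m u v
      by (intro bexI[of _ "(a+1,b)"]) (auto simp: GV_iff md_def cprod_adj_def P2inf_adj_def Pn_adj_def)
  next
    case 2 then show ?thesis using bn m u v
      by (intro bexI[of _ "(a-1,b)"]) (auto simp: GV_iff md_def cprod_adj_def P2inf_adj_def Pn_adj_def)
  next
    case 3 then show ?thesis using bn m u v
      by (intro bexI[of _ "(a,b+1)"]) (auto simp: GV_iff md_def cprod_adj_def P2inf_adj_def Pn_adj_def)
  next
    case 4 then show ?thesis using bn m u v
      by (intro bexI[of _ "(a,b-1)"]) (auto simp: GV_iff md_def cprod_adj_def P2inf_adj_def Pn_adj_def)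
  next
    case 5 then show ?thesis using m by simp
  qed
qed

lemma walk_exists:
  "\<forall>u v. u \<in> GV n \<longrightarrow> v \<in> GV n \<longrightarrow> md u v = k \<longrightarrow>
     (\<exists>xs. is_walk (GV n) GA xs \<and> hd xs = u \<and> last xs = v \<and> length xs = Suc k)"
proof (induction k)
  case 0
  show ?case
  proof (intro allI impI)
    fix u v :: "int \<times> nat" assume "u \<in> GV n" "v \<in> GV n" "md u v = 0"
    then have "u = v" by (cases u; cases v) (auto simp: md_def)
    then show "\<exists>xs. is_walk (GV n) GA xs \<and> hd xs = u \<and> last xs = v \<and> length xs = Suc 0"
      using \<open>u \<in> GV n\<close> by (intro exI[of _ "[u]"]) (simp add: is_walk_def)
  qed
next
  case (Suc k)
  show ?case
  proof (intro allI impI)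
    fix u v :: "int \<times> nat" assume h: "u \<in> GV n" "v \<in> GV n" "md u v = Suc k"
    obtain w where w: "w \<in> GV n" "GA u w" "md w v = k" using step_exists[OF h] by blast
    obtain xs where xs: "is_walk (GV n) GA xs" "hd xs = w" "last xs = v" "length xs = Suc k"
      using Suc.IH w h by blast
    have "xs \<noteq> []" using xs by auto
    then show "\<exists>xs. is_walk (GV n) GA xs \<and> hd xs = u \<and> last xs = v \<and> length xs = Suc (Suc k)"
      using xs w h by (intro exI[of _ "u # xs"]) (simp add: is_walk_Cons)
  qed
qed

lemma gdist_md:
  assumes "u \<in> GV n" "v \<in> GV n"
  shows "gdist (GV n) GA u v = enat (md u v)"
proof (rule antisym)
  obtain xs where xs: "is_walk (GV n) GA xs" "hd xs = u" "last xs = v" "length xs = Suc (md u v)"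
    using walk_exists assms by blast
  show "gdist (GV n) GA u v \<le> enat (md u v)"
    unfolding gdist_def using xs by (intro INF_lower2[of xs]) auto
  show "enat (md u v) \<le> gdist (GV n) GA u v"
    unfolding gdist_def using walk_lower by (intro INF_greatest) fastforce
qed

lemma resolves_md:
  assumes "x \<in> GV n" "u \<in> GV n" "v \<in> GV n"
  shows "resolves (GV n) GA x u v \<longleftrightarrow> md u x \<noteq> md v x"
  using assms by (simp add: resolves_def gdist_md)

lemma u1: assumes "a \<le> c" "1 \<le> e" shows "md (a,0) (c,e) = md (a-1,1) (c,e)"
  using assms by (simp add: md_def)
lemma u2: assumes "a \<le> c" "e \<le> n - 2" "n \<ge> 2" shows "md (a,n-1) (c,e) = md (a-1,n-2) (c,e)"
  using assms by (simp add: md_def of_nat_diff)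

lemma unresolved:
  assumes n: "n \<ge> 2" and x: "x1 \<in> GV n" "x2 \<in> GV n"
  shows "\<exists>u\<in>GV n. \<exists>v\<in>GV n. u \<noteq> v \<and> md u x1 = md v x1 \<and> md u x2 = md v x2"
proof -
  obtain c1 e1 c2 e2 where x1: "x1 = (c1,e1)" and x2: "x2 = (c2,e2)" by (cases x1; cases x2)
  have e: "e1 < n" "e2 < n" using x x1 x2 by (auto simp: GV_iff)
  define a where "a = min c1 c2"
  have a: "a \<le> c1" "a \<le> c2" unfolding a_def by auto
  have sym: "\<exists>u\<in>GV n. \<exists>v\<in>GV n. u \<noteq> v \<and> md u (c,0) = md v (c,0) \<and> md u (d,n-1) = md v (d,n-1)" for c d
  proof -
    consider "c < d" | "c > d" | "c = d" by linarith
    then show ?thesis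
    proof cases
      case 1
      have "md (c,1) (c,0) = md (c+1,0) (c,0)" "md (c,1) (d,n-1) = md (c+1,0) (d,n-1)"
        using 1 n by (simp_all add: md_def of_nat_diff)
      then show ?thesis using n by (intro bexI[of _ "(c,1)"] bexI[of _ "(c+1,0)"]) (auto simp: GV_iff)
    next
      case 2
      have "md (c,1) (c,0) = md (c-1,0) (c,0)" "md (c,1) (d,n-1) = md (c-1,0) (d,n-1)"
        using 2 n by (simp_all add: md_def of_nat_diff)
      then show ?thesis using n by (intro bexI[of _ "(c,1)"] bexI[of _ "(c-1,0)"]) (auto simp: GV_iff)
    next
      case 3
      have "md (c-1,0) (c,0) = md (c+1,0) (c,0)" "md (c-1,0) (d,n-1) = md (c+1,0) (d,n-1)"
        using 3 n by (simp_all add: md_def of_nat_diff)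
      then show ?thesis using n by (intro bexI[of _ "(c-1,0)"] bexI[of _ "(c+1,0)"]) (auto simp: GV_iff)
    qed
  qed
  consider "e1 \<ge> 1" "e2 \<ge> 1" | "e1 \<le> n - 2" "e2 \<le> n - 2"
    | "e1 = 0" "e2 = n - 1" | "e1 = n - 1" "e2 = 0" using e n by linarith
  then show ?thesis
  proof cases
    case 1
    have "md (a,0) x1 = md (a-1,1) x1" "md (a,0) x2 = md (a-1,1) x2"
      using u1 a 1 x1 x2 by auto
    then show ?thesis using n by (intro bexI[of _ "(a,0)"] bexI[of _ "(a-1,1)"]) (auto simp: GV_iff)
  next
    case 2
    have "md (a,n-1) x1 = md (a-1,n-2) x1" "md (a,n-1) x2 = md (a-1,n-2) x2"
      using u2 a 2 x1 x2 n by auto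
    then show ?thesis using n by (intro bexI[of _ "(a,n-1)"] bexI[of _ "(a-1,n-2)"]) (auto simp: GV_iff)
  next
    case 3 then show ?thesis using sym[of c1 c2] x1 x2 by simp
  next
    case 4 then show ?thesis using sym[of c2 c1] x1 x2 by blast
  qed
qed

lemma small_subset:
  assumes "finite S" "card S \<le> 2" "S \<subseteq> V" "y \<in> V"
  shows "\<exists>x1\<in>V. \<exists>x2\<in>V. S \<subseteq> {x1, x2}"
proof -
  consider "card S = 0" | "card S = 1" | "card S = 2" using assms(2) by linarith
  then show ?thesis
  proof cases
    case 1 then show ?thesis using assms by auto
  next
    case 2
    then obtain x where "S = {x}" by (rule card_1_singletonE)
    then show ?thesis using assms by auto
  next
    case 3 then show ?thesis using assms by (auto simp: card_2_iff)
  qed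
qed

lemma lower3:
  assumes n: "n \<ge> 2" and S: "finite S" "resolving_set (GV n) GA S"
  shows "3 \<le> card S"
proof (rule ccontr)
  assume "\<not> 3 \<le> card S"
  then have c: "card S \<le> 2" by simp
  have sub: "S \<subseteq> GV n" using S by (simp add: resolving_set_def)
  have y: "(0,0) \<in> GV n" using n by (simp add: GV_iff)
  obtain x1 x2 where x: "x1 \<in> GV n" "x2 \<in> GV n" "S \<subseteq> {x1,x2}"
    using small_subset[OF S(1) c sub y] by blast
  obtain u v where uv: "u \<in> GV n" "v \<in> GV n" "u \<noteq> v" "md u x1 = md v x1" "md u x2 = md v x2"
    using unresolved[OF n x(1,2)] by blast
  then obtain z where z: "z \<in> S" "resolves (GV n) GA z u v"
    using S(2) unfolding resolving_set_def by blast
  have "z = x1 \<or> z = x2" using z x by auto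
  then show False using z uv x resolves_md by metis
qed

theorem proposition5:
  fixes n :: nat
  assumes "n \<ge> 2"
  shows "metric_dim (cprod_V P2inf_V (Pn_V n)) (cprod_adj P2inf_adj Pn_adj) = 3
       \<and> metric_basis (cprod_V P2inf_V (Pn_V n)) (cprod_adj P2inf_adj Pn_adj)
           {(0, 0), (0, n - 1), (1, 0)}"
proof -
  let ?S = "{(0, 0), (0, n - 1), (1, 0)} :: (int \<times> nat) set"
  have cS: "card ?S = 3" using assms by simp
  have subS: "?S \<subseteq> GV n" using assms by (auto simp: GV_iff)
  have res: "resolving_set (GV n) GA ?S"
    unfolding resolving_set_def
  proof (intro conjI subS ballI impI)
    fix u v assume uv: "u \<in> GV n" "v \<in> GV n" "u \<noteq> v"
    show "\<exists>x\<in>?S. resolves (GV n) GA x u v"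
    proof (rule ccontr)
      assume "\<not> ?thesis"
      then have eq: "md u x = md v x" if "x \<in> ?S" for x
        using that resolves_md uv subS by blast
      obtain a b c e where u: "u = (a,b)" and v: "v = (c,e)" by (cases u; cases v)
      have bn: "b < n" "e < n" using uv u v by (auto simp: GV_iff)
      have "md u (0,0) = md v (0,0)" "md u (0,n-1) = md v (0,n-1)" "md u (1,0) = md v (1,0)"
        using eq by auto
      then have "a = c \<and> b = e" using fin[OF bn assms] unfolding u v by blast
      then have "u = v" using u v by simp
      then show False using uv by simp
    qed
  qed
  have md3: "metric_dim (GV n) GA = 3"
    unfolding metric_dim_def
  proof (rule antisym)
    show "(INF S\<in>{S. finite S \<and> resolving_set (GV n) GA S}. enat (card S)) \<le> 3"
      using res cS by (intro INF_lower2[of ?S]) (auto simp: numeral_eq_enat)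
    show "3 \<le> (INF S\<in>{S. finite S \<and> resolving_set (GV n) GA S}. enat (card S))"
      using lower3[OF assms] by (intro INF_greatest) (auto simp: numeral_eq_enat)
  qed
  show ?thesis using md3 res cS by (simp add: metric_basis_def numeral_eq_enat)
qed

end
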